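(* Let $A\in \mathbb{Z}^{m\times n}$, $b\in \mathbb{Z}^m$, and $P:=\{x\in\mathbb{R}^n:Ax\leq b\}$. For a nonempty face $F$ of $P$, denote by $A_Fx\leq b_F$ the subsystem of $Ax\leq b$ consisting of the implicit equalities of $F$, i.e. those inequalities $a_i^\top x\le b_i$ of $Ax\le b$ with $a_i^\top x=b_i$ for all $x\in F$. Then for every prime $p$ the following are equivalent: (1) $Ax\leq b$ is totally dual $p$-adic; (2) for every nonempty face $F$ of $P$, the rows of $A_F$ form a $p$-adic generating set for a cone; (3) for every nonempty face $F$ of $P$, the rows of $A_F$ form a $p$-adic generating set for a subspace.
   Context: Let $p$ be a prime. A $p$-adic rational is a number of the form $a/p^k$ with $a,k$ integers and $k\ge 0$; a vector is $p$-adic if all its entries are $p$-adic rationals. A system $Ax\le b$ with $A\in\mathbb{Z}^{m\times n}$, $b\in\mathbb{Z}^m$ is totally dual $p$-adic if for every $w\in\mathbb{Z}^n$ for which $\min\{b^\top y: A^\top y=w,\ y\ge \mathbf{0}\}$ has an optimal solution, it has a $p$-adic optimal solution. A finite set $\{a^1,\dots,a^n\}\subseteq\mathbb{Z}^m$ is a $p$-adic generating set for a cone if every integral vector in its conic hull is a conic combination of $a^1,\dots,a^n$ with $p$-adic coefficients; it is a $p$-adic generating set for a subspace if every integral vector in its linear hull is a linear combination of $a^1,\dots,a^n$ with $p$-adic coefficients. *)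

theory Defs
  imports "HOL-Analysis.Analysis"
begin

definition rowR :: "int^'n^'m \<Rightarrow> 'm \<Rightarrow> real^'n" where
  "rowR A i = (\<chi> j. real_of_int (A $ i $ j))"

definition polyP :: "int^'n^'m \<Rightarrow> int^'m \<Rightarrow> (real^'n) set" where
  "polyP A b = {x. \<forall>i. rowR A i \<bullet> x \<le> real_of_int (b $ i)}"

definition implicit_eqs :: "int^'n^'m \<Rightarrow> int^'m \<Rightarrow> (real^'n) set \<Rightarrow> 'm set" where
  "implicit_eqs A b F = {i. \<forall>x\<in>F. rowR A i \<bullet> x = real_of_int (b $ i)}"

definition padic_rat :: "nat \<Rightarrow> real \<Rightarrow> bool" where
  "padic_rat p q \<longleftrightarrow> (\<exists>a::int. \<exists>k::nat. q = real_of_int a / real p ^ k)"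

definition padic_vec :: "nat \<Rightarrow> real^'k \<Rightarrow> bool" where
  "padic_vec p v \<longleftrightarrow> (\<forall>i. padic_rat p (v $ i))"

definition integral_vec :: "real^'k \<Rightarrow> bool" where
  "integral_vec v \<longleftrightarrow> (\<forall>i. v $ i \<in> \<int>)"

definition dual_feasible :: "int^'n^'m \<Rightarrow> int^'n \<Rightarrow> real^'m \<Rightarrow> bool" where
  "dual_feasible A w y \<longleftrightarrow> (\<forall>i. y $ i \<ge> 0) \<and>
     (\<Sum>i\<in>UNIV. y $ i *\<^sub>R rowR A i) = (\<chi> j. real_of_int (w $ j))"

definition dual_optimal :: "int^'n^'m \<Rightarrow> int^'m \<Rightarrow> int^'n \<Rightarrow> real^'m \<Rightarrow> bool" where
  "dual_optimal A b w y \<longleftrightarrow> dual_feasible A w y \<and>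
     (\<forall>y'. dual_feasible A w y' \<longrightarrow>
        (\<Sum>i\<in>UNIV. real_of_int (b $ i) * y $ i) \<le> (\<Sum>i\<in>UNIV. real_of_int (b $ i) * y' $ i))"

definition totally_dual_padic :: "nat \<Rightarrow> int^'n^'m \<Rightarrow> int^'m \<Rightarrow> bool" where
  "totally_dual_padic p A b \<longleftrightarrow>
     (\<forall>w::int^'n. (\<exists>y. dual_optimal A b w y) \<longrightarrow> (\<exists>y. dual_optimal A b w y \<and> padic_vec p y))"

definition padic_gen_cone :: "nat \<Rightarrow> 'i set \<Rightarrow> ('i \<Rightarrow> real^'k) \<Rightarrow> bool" where
  "padic_gen_cone p I v \<longleftrightarrow>
     (\<forall>x. integral_vec x \<and> (\<exists>c. (\<forall>i\<in>I. c i \<ge> 0) \<and> x = (\<Sum>i\<in>I. c i *\<^sub>R v i)) \<longrightarrow>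
        (\<exists>c. (\<forall>i\<in>I. c i \<ge> 0 \<and> padic_rat p (c i)) \<and> x = (\<Sum>i\<in>I. c i *\<^sub>R v i)))"

definition padic_gen_subspace :: "nat \<Rightarrow> 'i set \<Rightarrow> ('i \<Rightarrow> real^'k) \<Rightarrow> bool" where
  "padic_gen_subspace p I v \<longleftrightarrow>
     (\<forall>x. integral_vec x \<and> x \<in> span (v ` I) \<longrightarrow>
        (\<exists>c. (\<forall>i\<in>I. padic_rat p (c i)) \<and> x = (\<Sum>i\<in>I. c i *\<^sub>R v i)))"

end

theory Submission
  imports Defs
begin


lemma padic_of_int: "padic_rat p (real_of_int n)"
  unfolding padic_rat_def by (rule exI[of _ n], rule exI[of _ 0]) simp

lemma padic_zero: "padic_rat p 0"
  using padic_of_int[of p 0] by simp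

lemma padic_add:
  assumes "p > 0" "padic_rat p x" "padic_rat p y"
  shows "padic_rat p (x + y)"
proof -
  obtain a k where x: "x = real_of_int a / real p ^ k" using assms(2) unfolding padic_rat_def by blast
  obtain a' k' where y: "y = real_of_int a' / real p ^ k'" using assms(3) unfolding padic_rat_def by blast
  have pk: "real p ^ k \<noteq> 0" "real p ^ k' \<noteq> 0" using assms(1) by auto
  have "x + y = real_of_int (a * int p ^ k' + a' * int p ^ k) / real p ^ (k + k')"
    unfolding x y using pk by (simp add: field_simps power_add)
  then show ?thesis unfolding padic_rat_def by blast
qed

lemma padic_div:
  assumes "p > 0" "padic_rat p x"
  shows "padic_rat p (x / real p ^ k)"
proof -
  obtain a k' where x: "x = real_of_int a / real p ^ k'" using assms(2) unfolding padic_rat_def by blast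
  have "x / real p ^ k = real_of_int a / real p ^ (k' + k)"
    unfolding x by (simp add: power_add)
  then show ?thesis unfolding padic_rat_def by blast
qed

lemma sum_option_UNIV:
  fixes f :: "'a::finite option \<Rightarrow> 'b::comm_monoid_add"
  shows "(\<Sum>u\<in>UNIV. f u) = f None + (\<Sum>a\<in>UNIV. f (Some a))"
proof -
  have "(\<Sum>u\<in>UNIV. f u) = (\<Sum>u\<in>insert None (range Some). f u)"
    by (simp add: UNIV_option_conv[symmetric])
  also have "\<dots> = f None + (\<Sum>u\<in>range Some. f u)"
    by (subst sum.insert) auto
  also have "(\<Sum>u\<in>range Some. f u) = (\<Sum>a\<in>UNIV. f (Some a))"
    by (subst sum.reindex) (auto simp: inj_on_def)
  finally show ?thesis .
qed

lemma span_explicit_idx: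
  fixes g :: "'i \<Rightarrow> 'a::real_vector"
  assumes "finite I" "x \<in> span (g ` I)"
  shows "\<exists>c. x = (\<Sum>i\<in>I. c i *\<^sub>R g i)"
  using assms(2)
proof (induct rule: span_induct_alt)
  show "\<exists>c. 0 = (\<Sum>i\<in>I. c i *\<^sub>R g i)" by (rule exI[of _ "\<lambda>_. 0"]) simp
next
  fix c x y assume H: "x \<in> g ` I" "\<exists>c. y = (\<Sum>i\<in>I. c i *\<^sub>R g i)"
  then obtain i where i: "i \<in> I" "x = g i" by blast
  from H obtain d where d: "y = (\<Sum>i\<in>I. d i *\<^sub>R g i)" by blast
  have "c *\<^sub>R x + y = (\<Sum>j\<in>I. (d j + (if j = i then c else 0)) *\<^sub>R g j)"
    using assms(1) i by (simp add: d scaleR_add_left sum.distrib if_distrib[of "\<lambda>t. t *\<^sub>R g _"] sum.delta cong: if_cong)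
  then show "\<exists>e. c *\<^sub>R x + y = (\<Sum>i\<in>I. e i *\<^sub>R g i)" by (rule exI[of _ "\<lambda>j. d j + (if j = i then c else 0)"])
qed

lemma cone_sum_in_hull:
  assumes "finite I" "\<And>i. i \<in> I \<Longrightarrow> f i \<in> convex_cone hull S"
  shows "sum f I \<in> convex_cone hull S"
  using assms by (induction I rule: finite_induct) (auto intro: convex_cone_hull_add convex_cone_hull_contains_0)

lemma cone_eq_hull:
  fixes g :: "'i \<Rightarrow> 'a::euclidean_space"
  assumes "finite I"
  shows "{\<Sum>i\<in>I. c i *\<^sub>R g i | c. \<forall>i\<in>I. 0 \<le> c i} = convex_cone hull (g ` I)"
    (is "?C = _")
proof
  show "?C \<subseteq> convex_cone hull (g ` I)"
  proof
    fix x assume "x \<in> ?C"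
    then obtain c where c: "\<forall>i\<in>I. 0 \<le> c i" "x = (\<Sum>i\<in>I. c i *\<^sub>R g i)" by blast
    show "x \<in> convex_cone hull (g ` I)"
      unfolding c(2) using assms c(1)
      by (intro cone_sum_in_hull) (auto intro!: convex_cone_hull_mul[OF hull_inc])
  qed
next
  have sub: "g ` I \<subseteq> ?C"
  proof
    fix x assume "x \<in> g ` I"
    then obtain i where i: "i \<in> I" "x = g i" by blast
    have "x = (\<Sum>j\<in>I. (if j = i then 1 else 0) *\<^sub>R g j)"
      using assms i by (simp add: if_distrib[of "\<lambda>t. t *\<^sub>R g _"] sum.delta cong: if_cong)
    moreover have "\<forall>j\<in>I. (0::real) \<le> (if j = i then 1 else 0)" by simp
    ultimately show "x \<in> ?C" by (intro CollectI exI[of _ "\<lambda>j. if j = i then 1 else 0"]) blast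
  qed
  have cc: "convex_cone ?C"
    unfolding convex_cone_def
  proof (intro conjI)
    have "(\<Sum>i\<in>I. (\<lambda>_. 0::real) i *\<^sub>R g i) \<in> ?C" by (intro CollectI exI[of _ "\<lambda>_. 0::real"]) simp
    then show "?C \<noteq> {}" by blast
    show "convex ?C"
      unfolding convex_def
    proof (intro ballI allI impI)
      fix x y u v assume xy: "x \<in> ?C" "y \<in> ?C" and uv: "0 \<le> (u::real)" "0 \<le> v" "u + v = 1"
      from xy obtain c d where c: "\<forall>i\<in>I. 0 \<le> c i" "x = (\<Sum>i\<in>I. c i *\<^sub>R g i)"
        and d: "\<forall>i\<in>I. 0 \<le> d i" "y = (\<Sum>i\<in>I. d i *\<^sub>R g i)" by blast
      have "u *\<^sub>R x + v *\<^sub>R y = (\<Sum>i\<in>I. (u * c i + v * d i) *\<^sub>R g i)"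
        by (simp add: c d scaleR_sum_right scaleR_add_left sum.distrib)
      moreover have "\<forall>i\<in>I. 0 \<le> u * c i + v * d i" using c d uv by auto
      ultimately show "u *\<^sub>R x + v *\<^sub>R y \<in> ?C" by (intro CollectI exI[of _ "\<lambda>i. u * c i + v * d i"]) blast
    qed
    show "conic ?C"
      unfolding conic_def
    proof (intro allI impI)
      fix x and t :: real assume xt: "x \<in> ?C" and t: "0 \<le> t"
      then obtain c where c: "\<forall>i\<in>I. 0 \<le> c i" "x = (\<Sum>i\<in>I. c i *\<^sub>R g i)" by blast
      have "t *\<^sub>R x = (\<Sum>i\<in>I. (t * c i) *\<^sub>R g i)"
        by (simp add: c scaleR_sum_right)
      moreover have "\<forall>i\<in>I. 0 \<le> t * c i" using c t by auto
      ultimately show "t *\<^sub>R x \<in> ?C" by (intro CollectI exI[of _ "\<lambda>i. t * c i"]) blast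
    qed
  qed
  show "convex_cone hull (g ` I) \<subseteq> ?C"
    by (rule hull_minimal[OF sub]) (use cc in simp)
qed

lemma farkas_idx:
  fixes g :: "'i \<Rightarrow> 'a::euclidean_space"
  assumes "finite I" "\<not> (\<exists>c. (\<forall>i\<in>I. 0 \<le> c i) \<and> z = (\<Sum>i\<in>I. c i *\<^sub>R g i))"
  shows "\<exists>a. (\<forall>i\<in>I. a \<bullet> g i \<le> 0) \<and> a \<bullet> z > 0"
proof -
  let ?C = "convex_cone hull (g ` I)"
  have zC: "z \<notin> ?C"
    using assms(2) cone_eq_hull[OF assms(1), of g] by blast
  have "closed ?C" using assms(1) by (simp add: closed_convex_cone_hull)
  moreover have "convex ?C" by (simp add: convex_convex_cone_hull)
  ultimately obtain a b where ab: "a \<bullet> z < b" "\<forall>x\<in>?C. a \<bullet> x > b"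
    using separating_hyperplane_closed_point zC by blast
  have b0: "b < 0" using ab(2) convex_cone_hull_contains_0 by fastforce
  have "a \<bullet> g i \<ge> 0" if i: "i \<in> I" for i
  proof (rule ccontr)
    assume neg: "\<not> a \<bullet> g i \<ge> 0"
    define t where "t = b / (a \<bullet> g i)"
    have "t \<ge> 0" using neg b0 unfolding t_def by (simp add: divide_nonpos_neg)
    then have "t *\<^sub>R g i \<in> ?C" using i by (intro convex_cone_hull_mul hull_inc) auto
    then have "a \<bullet> (t *\<^sub>R g i) > b" using ab by blast
    moreover have "a \<bullet> (t *\<^sub>R g i) = b" using neg unfolding t_def by simp
    ultimately show False by simp
  qed
  then show ?thesis using ab b0 by (intro exI[of _ "-a"]) auto
qed



lemma feas_inner:
  assumes "dual_feasible A w y"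
  shows "(\<chi> j. real_of_int (w$j)) \<bullet> x = (\<Sum>i\<in>UNIV. y$i * (rowR A i \<bullet> x))"
proof -
  have "(\<chi> j. real_of_int (w$j)) = (\<Sum>i\<in>UNIV. y $ i *\<^sub>R rowR A i)"
    using assms unfolding dual_feasible_def by simp
  then show ?thesis by (simp add: inner_sum_left)
qed

lemma weak_duality:
  assumes "dual_feasible A w y" "x \<in> polyP A b"
  shows "(\<chi> j. real_of_int (w$j)) \<bullet> x \<le> (\<Sum>i\<in>UNIV. real_of_int (b$i) * y$i)"
proof -
  have "(\<chi> j. real_of_int (w$j)) \<bullet> x = (\<Sum>i\<in>UNIV. y$i * (rowR A i \<bullet> x))"
    by (rule feas_inner[OF assms(1)])
  also have "\<dots> \<le> (\<Sum>i\<in>UNIV. y$i * real_of_int (b$i))"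
    using assms unfolding dual_feasible_def polyP_def by (intro sum_mono mult_left_mono) auto
  finally show ?thesis by (simp add: mult.commute)
qed

lemma value_tight:
  assumes "dual_feasible A w y" "\<forall>i. y$i \<noteq> 0 \<longrightarrow> rowR A i \<bullet> x = real_of_int (b$i)"
  shows "(\<Sum>i\<in>UNIV. real_of_int (b$i) * y$i) = (\<chi> j. real_of_int (w$j)) \<bullet> x"
proof -
  have "(\<Sum>i\<in>UNIV. real_of_int (b$i) * y$i) = (\<Sum>i\<in>UNIV. y$i * (rowR A i \<bullet> x))"
    using assms(2) by (intro sum.cong) (auto simp: mult.commute)
  then show ?thesis using feas_inner[OF assms(1)] by simp
qed

lemma opt_tight:
  assumes "dual_feasible A w y" "x \<in> polyP A b" "\<forall>i. y$i \<noteq> 0 \<longrightarrow> rowR A i \<bullet> x = real_of_int (b$i)"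
  shows "dual_optimal A b w y"
  unfolding dual_optimal_def
  using assms value_tight[OF assms(1,3)] weak_duality[OF _ assms(2)] by auto

lemma comp_slack:
  assumes "dual_feasible A w y" "x \<in> polyP A b"
    "(\<Sum>i\<in>UNIV. real_of_int (b$i) * y$i) = (\<chi> j. real_of_int (w$j)) \<bullet> x"
    "y$k \<noteq> 0"
  shows "rowR A k \<bullet> x = real_of_int (b$k)"
proof -
  have "(\<Sum>i\<in>UNIV. y$i * (real_of_int (b$i) - rowR A i \<bullet> x)) =
        (\<Sum>i\<in>UNIV. real_of_int (b$i) * y$i) - (\<Sum>i\<in>UNIV. y$i * (rowR A i \<bullet> x))"
    by (simp add: sum_subtractf algebra_simps)
  also have "\<dots> = 0" using assms(3) feas_inner[OF assms(1)] by simp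
  finally have s0: "(\<Sum>i\<in>UNIV. y$i * (real_of_int (b$i) - rowR A i \<bullet> x)) = 0" .
  have nn: "\<forall>i\<in>UNIV. 0 \<le> y$i * (real_of_int (b$i) - rowR A i \<bullet> x)"
    using assms(1,2) unfolding dual_feasible_def polyP_def by auto
  have "y$k * (real_of_int (b$k) - rowR A k \<bullet> x) = 0"
    using sum_nonneg_eq_0_iff[of UNIV "\<lambda>i. y$i * (real_of_int (b$i) - rowR A i \<bullet> x)"] nn s0 by auto
  then show ?thesis using assms(4) by simp
qed

lemma opt_value_eq:
  assumes "dual_optimal A b w y" "dual_optimal A b w y'"
  shows "(\<Sum>i\<in>UNIV. real_of_int (b$i) * y$i) = (\<Sum>i\<in>UNIV. real_of_int (b$i) * y'$i)"
  using assms unfolding dual_optimal_def by (meson order_antisym)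

lemma avg_opt:
  assumes "dual_optimal A b w y" "dual_optimal A b w y'"
  shows "dual_optimal A b w ((1/2) *\<^sub>R (y + y'))"
proof -
  have f: "dual_feasible A w y" "dual_feasible A w y'" using assms unfolding dual_optimal_def by auto
  have "(\<Sum>i\<in>UNIV. ((1/2) *\<^sub>R (y + y')) $ i *\<^sub>R rowR A i)
      = (1/2) *\<^sub>R ((\<Sum>i\<in>UNIV. y $ i *\<^sub>R rowR A i) + (\<Sum>i\<in>UNIV. y' $ i *\<^sub>R rowR A i))"
    by (simp add: scaleR_sum_right sum.distrib[symmetric] scaleR_add_left[symmetric] add_divide_distrib)
  also have "\<dots> = (\<chi> j. real_of_int (w $ j))" using f unfolding dual_feasible_def
    by (simp add: scaleR_2[symmetric] del: scaleR_2)
  finally have feas: "dual_feasible A w ((1/2) *\<^sub>R (y + y'))"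
    using f unfolding dual_feasible_def by auto
  have "(\<Sum>i\<in>UNIV. real_of_int (b$i) * ((1/2) *\<^sub>R (y + y'))$i)
     = (1/2) * ((\<Sum>i\<in>UNIV. real_of_int (b$i) * y$i) + (\<Sum>i\<in>UNIV. real_of_int (b$i) * y'$i))"
    by (simp add: sum_distrib_left sum.distrib algebra_simps)
  also have "\<dots> = (\<Sum>i\<in>UNIV. real_of_int (b$i) * y$i)" using opt_value_eq[OF assms] by simp
  finally show ?thesis using assms(1) feas unfolding dual_optimal_def by simp
qed

lemma convex_polyP: "convex (polyP A b)"
proof -
  have "polyP A b = (\<Inter>i. {x. rowR A i \<bullet> x \<le> real_of_int (b$i)})"
    unfolding polyP_def by auto
  then show ?thesis by (auto intro!: convex_INT convex_halfspace_le)
qed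



lemma sum_restrict_UNIV:
  fixes g :: "'m::finite \<Rightarrow> 'a::real_vector"
  shows "(\<Sum>i\<in>UNIV. (if i \<in> I then c i else 0) *\<^sub>R g i) = (\<Sum>i\<in>I. c i *\<^sub>R g i)"
proof -
  have "(\<Sum>i\<in>UNIV. (if i \<in> I then c i else 0) *\<^sub>R g i) = (\<Sum>i\<in>UNIV. if i \<in> I then c i *\<^sub>R g i else 0)"
    by (intro sum.cong) auto
  also have "\<dots> = (\<Sum>i\<in>{i\<in>UNIV. i \<in> I}. c i *\<^sub>R g i)"
    by (rule sum.inter_filter[symmetric]) simp
  finally show ?thesis by simp
qed

lemma int_vec_eq:
  assumes "integral_vec x"
  shows "(\<chi> j. real_of_int ((\<chi> j. \<lfloor>x$j\<rfloor>) $ j)) = x"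
proof -
  have "real_of_int \<lfloor>x$j\<rfloor> = x$j" for j
    using assms unfolding integral_vec_def by (metis Ints_cases floor_of_int)
  then show ?thesis by (simp add: vec_eq_iff)
qed

lemma dir12:
  assumes tdp: "totally_dual_padic p A b" and F: "F face_of polyP A b" "F \<noteq> {}"
  shows "padic_gen_cone p (implicit_eqs A b F) (rowR A)"
  unfolding padic_gen_cone_def
proof (intro allI impI)
  let ?I = "implicit_eqs A b F"
  fix x assume H: "integral_vec x \<and> (\<exists>c. (\<forall>i\<in>?I. 0 \<le> c i) \<and> x = (\<Sum>i\<in>?I. c i *\<^sub>R rowR A i))"
  then obtain c where c: "\<forall>i\<in>?I. 0 \<le> c i" "x = (\<Sum>i\<in>?I. c i *\<^sub>R rowR A i)" by blast
  define w :: "int^'a" where "w = (\<chi> j. \<lfloor>x$j\<rfloor>)"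
  have wx: "(\<chi> j. real_of_int (w$j)) = x" unfolding w_def using H int_vec_eq by blast
  define y :: "real^'b" where "y = (\<chi> i. if i \<in> ?I then c i else 0)"
  have feas: "dual_feasible A w y"
    unfolding dual_feasible_def y_def using c wx by (simp add: sum_restrict_UNIV)
  have FP: "F \<subseteq> polyP A b" using F(1) face_of_imp_subset by blast
  obtain x0 where x0: "x0 \<in> F" using F(2) by blast
  have tight: "\<forall>i. y$i \<noteq> 0 \<longrightarrow> rowR A i \<bullet> x' = real_of_int (b$i)" if "x' \<in> F" for x'
    using that unfolding y_def implicit_eqs_def by auto
  have opt: "dual_optimal A b w y" using opt_tight[OF feas _ tight] x0 FP by blast
  then obtain y' where y': "dual_optimal A b w y'" "padic_vec p y'"
    using tdp unfolding totally_dual_padic_def by blast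
  have feas': "dual_feasible A w y'" using y'(1) unfolding dual_optimal_def by blast
  have val: "(\<Sum>i\<in>UNIV. real_of_int (b$i) * y'$i) = (\<chi> j. real_of_int (w$j)) \<bullet> x'" if "x' \<in> F" for x'
    using opt_value_eq[OF y'(1) opt] value_tight[OF feas tight[OF that]] by simp
  have supp: "i \<in> ?I" if "y'$i \<noteq> 0" for i
    unfolding implicit_eqs_def using comp_slack[OF feas' _ val that] FP by blast
  have "x = (\<Sum>i\<in>UNIV. y'$i *\<^sub>R rowR A i)" using feas' wx unfolding dual_feasible_def by simp
  also have "\<dots> = (\<Sum>i\<in>?I. y'$i *\<^sub>R rowR A i)"
    using supp by (intro sum.mono_neutral_right) auto
  finally have "x = (\<Sum>i\<in>?I. y'$i *\<^sub>R rowR A i)" .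
  moreover have "\<forall>i\<in>?I. 0 \<le> y'$i \<and> padic_rat p (y'$i)"
    using feas' y'(2) unfolding dual_feasible_def padic_vec_def by auto
  ultimately show "\<exists>c. (\<forall>i\<in>?I. 0 \<le> c i \<and> padic_rat p (c i)) \<and> x = (\<Sum>i\<in>?I. c i *\<^sub>R rowR A i)"
    by (intro exI[of _ "\<lambda>i. y'$i"]) blast
qed

lemma dir23:
  fixes A :: "int^'n^'m"
  assumes cone: "padic_gen_cone p I (rowR A)" and fin: "finite I" and p: "p > 0"
  shows "padic_gen_subspace p I (rowR A)"
  unfolding padic_gen_subspace_def
proof (intro allI impI)
  fix x assume H: "integral_vec x \<and> x \<in> span (rowR A ` I)"
  then obtain l where l: "x = (\<Sum>i\<in>I. l i *\<^sub>R rowR A i)"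
    using span_explicit_idx[OF fin] by blast
  define N :: int where "N = \<lceil>\<Sum>i\<in>I. \<bar>l i\<bar>\<rceil>"
  define s where "s = (\<Sum>i\<in>I. rowR A i)"
  define x' where "x' = x + real_of_int N *\<^sub>R s"
  have x'eq: "x' = (\<Sum>i\<in>I. (l i + real_of_int N) *\<^sub>R rowR A i)"
    unfolding x'_def s_def l by (simp add: scaleR_sum_right sum.distrib scaleR_add_left)
  have "x' $ j \<in> \<int>" for j
  proof -
    have "x' $ j = x $ j + real_of_int N * (\<Sum>i\<in>I. rowR A i $ j)"
      unfolding x'_def s_def by (simp only: vector_add_component vector_scaleR_component sum_component real_scaleR_def)
    also have "\<dots> = x $ j + real_of_int N * (\<Sum>i\<in>I. real_of_int (A$i$j))"
      by (simp only: rowR_def vec_lambda_beta)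
    moreover have "x $ j \<in> \<int>" using H unfolding integral_vec_def by blast
    moreover obtain k where "x $ j = real_of_int k" using \<open>x $ j \<in> \<int>\<close> Ints_cases by blast
    ultimately have "x' $ j = real_of_int (k + N * (\<Sum>i\<in>I. A$i$j))" by simp
    then show ?thesis by (simp only: Ints_of_int)
  qed
  then have int': "integral_vec x'" unfolding integral_vec_def by blast
  have nn: "\<forall>i\<in>I. 0 \<le> l i + real_of_int N"
  proof
    fix i assume i: "i \<in> I"
    have "\<bar>l i\<bar> \<le> (\<Sum>i\<in>I. \<bar>l i\<bar>)" using fin i by (intro member_le_sum) auto
    also have "\<dots> \<le> real_of_int N" unfolding N_def by linarith
    finally show "0 \<le> l i + real_of_int N" by linarith
  qed
  have ex: "\<exists>c. (\<forall>i\<in>I. 0 \<le> c i) \<and> x' = (\<Sum>i\<in>I. c i *\<^sub>R rowR A i)"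
    by (rule exI[of _ "\<lambda>i. l i + real_of_int N"]) (use nn x'eq in simp)
  obtain c where c: "\<forall>i\<in>I. 0 \<le> c i \<and> padic_rat p (c i)" "x' = (\<Sum>i\<in>I. c i *\<^sub>R rowR A i)"
    using cone[unfolded padic_gen_cone_def, rule_format, OF conjI[OF int' ex]] by blast
  have "x = x' - real_of_int N *\<^sub>R s" unfolding x'_def by simp
  also have "\<dots> = (\<Sum>i\<in>I. (c i + real_of_int (- N)) *\<^sub>R rowR A i)"
    unfolding c(2) s_def by (simp add: scaleR_sum_right scaleR_diff_left sum_subtractf)
  finally have "x = (\<Sum>i\<in>I. (c i + real_of_int (- N)) *\<^sub>R rowR A i)" .
  moreover have "\<forall>i\<in>I. padic_rat p (c i + real_of_int (- N))"
    by (intro ballI padic_add[OF p] padic_of_int) (use c(1) in blast)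
  ultimately show "\<exists>c. (\<forall>i\<in>I. padic_rat p (c i)) \<and> x = (\<Sum>i\<in>I. c i *\<^sub>R rowR A i)"
    by (intro exI[of _ "\<lambda>i. c i + real_of_int (- N)"]) blast
qed



lemma gsum:
  fixes a :: "'m::finite \<Rightarrow> 'v::real_vector" and bb :: "'m \<Rightarrow> real"
  shows "(\<Sum>u\<in>UNIV. c u *\<^sub>R (case u of None \<Rightarrow> (0, 1) | Some None \<Rightarrow> (- wv, - \<beta>) | Some (Some i) \<Rightarrow> (a i, bb i)))
   = ((\<Sum>i\<in>UNIV. c (Some (Some i)) *\<^sub>R a i) - c (Some None) *\<^sub>R wv,
      (\<Sum>i\<in>UNIV. c (Some (Some i)) * bb i) - c (Some None) * \<beta> + c None)"
proof -
  have "(\<Sum>u\<in>UNIV. c u *\<^sub>R (case u of None \<Rightarrow> (0, 1) | Some None \<Rightarrow> (- wv, - \<beta>) | Some (Some i) \<Rightarrow> (a i, bb i)))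
     = c None *\<^sub>R (0,1) + (c (Some None) *\<^sub>R (- wv, - \<beta>) + (\<Sum>i\<in>UNIV. c (Some (Some i)) *\<^sub>R (a i, bb i)))"
    by (simp only: sum_option_UNIV option.case)
  also have "\<dots> = ((\<Sum>i\<in>UNIV. c (Some (Some i)) *\<^sub>R a i) - c (Some None) *\<^sub>R wv,
      (\<Sum>i\<in>UNIV. c (Some (Some i)) * bb i) - c (Some None) * \<beta> + c None)"
    by (simp add: prod_eq_iff fst_sum snd_sum)
  finally show ?thesis .
qed

lemma int_floor_eq: "(x::real) \<in> \<int> \<Longrightarrow> real_of_int \<lfloor>x\<rfloor> = x"
  by (metis Ints_cases floor_of_int)
lemma PiE_UNIV_iff: "(\<lambda>j. f j) \<in> PiE (UNIV::'n set) (\<lambda>_. S) \<longleftrightarrow> (\<forall>j. f j \<in> S)"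
  by (simp add: PiE_UNIV_domain Pi_iff)
lemma floor_box:
  fixes y :: real
  assumes "\<bar>y\<bar> \<le> B" "y \<in> \<int>"
  shows "\<lfloor>y\<rfloor> \<in> {-\<lceil>B\<rceil>..\<lceil>B\<rceil>}"
proof -
  have e: "real_of_int \<lfloor>y\<rfloor> = y" using assms(2) int_floor_eq by blast
  have c: "B \<le> real_of_int \<lceil>B\<rceil>" by (rule le_of_int_ceiling)
  have "real_of_int (-\<lceil>B\<rceil>) \<le> real_of_int \<lfloor>y\<rfloor>" "real_of_int \<lfloor>y\<rfloor> \<le> real_of_int \<lceil>B\<rceil>"
  proof -
    have yb: "y \<le> B" "- y \<le> B" using assms(1) by (simp_all add: abs_le_iff)
    show "real_of_int (-\<lceil>B\<rceil>) \<le> real_of_int \<lfloor>y\<rfloor>" unfolding e of_int_minus using yb c by linarith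
    show "real_of_int \<lfloor>y\<rfloor> \<le> real_of_int \<lceil>B\<rceil>" unfolding e using yb c by linarith
  qed
  then show ?thesis by (simp only: of_int_le_iff atLeastAtMost_iff) 
qed

lemma finite_int_box:
  "finite {v::real^'n. integral_vec v \<and> (\<forall>j. \<bar>v$j\<bar> \<le> B)}"
proof -
  let ?S = "PiE (UNIV::'n set) (\<lambda>_. {-\<lceil>B\<rceil>..\<lceil>B\<rceil>})"
  have fin: "finite ?S" by (intro finite_PiE) auto
  have "{v::real^'n. integral_vec v \<and> (\<forall>j. \<bar>v$j\<bar> \<le> B)} \<subseteq> (\<lambda>f. \<chi> j. real_of_int (f j)) ` ?S"
  proof
    fix v :: "real^'n" assume v: "v \<in> {v. integral_vec v \<and> (\<forall>j. \<bar>v$j\<bar> \<le> B)}"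
    have eq: "(\<lambda>f. \<chi> j. real_of_int (f j)) (\<lambda>j. \<lfloor>v$j\<rfloor>) = v"
      using int_vec_eq[of v] v by simp
    have "\<lfloor>v$j\<rfloor> \<in> {-\<lceil>B\<rceil>..\<lceil>B\<rceil>}" for j
      using v floor_box unfolding integral_vec_def by blast
    then have inS: "(\<lambda>j. \<lfloor>v$j\<rfloor>) \<in> ?S" using PiE_UNIV_iff by blast
    show "v \<in> (\<lambda>f. \<chi> j. real_of_int (f j)) ` ?S"
      by (rule rev_image_eqI[of "\<lambda>j. \<lfloor>v$j\<rfloor>" ?S v "\<lambda>f. \<chi> j. real_of_int (f j)", OF inS]) (simp only: eq)
  qed
  then show ?thesis using fin finite_subset by blast
qed



lemma dir31_face:
  fixes A :: "int^'n^'m" and b :: "int^'m" and w :: "int^'n"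
  assumes ys: "dual_optimal A b w ys"
  shows "\<exists>y0 G. dual_optimal A b w y0 \<and> G face_of polyP A b \<and> G \<noteq> {} \<and>
     (\<forall>i. i \<in> implicit_eqs A b G \<longleftrightarrow> y0$i \<noteq> 0)"
proof -
  let ?wv = "(\<chi> j. real_of_int (w$j)) :: real^'n"
  let ?a = "rowR A"
  let ?bb = "\<lambda>i. real_of_int (b$i)"
  define supp where "supp y = card {i. y$i \<noteq> (0::real)}" for y :: "real^'m"
  have "\<forall>y. dual_optimal A b w y \<longrightarrow> supp y < card (UNIV::'m set) + 1"
    unfolding supp_def by (simp add: card_mono less_Suc_eq_le)
  then obtain y0 where y0: "dual_optimal A b w y0"
    and ymax: "\<forall>y. dual_optimal A b w y \<longrightarrow> supp y \<le> supp y0"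
    using ex_has_greatest_nat[of "dual_optimal A b w" ys supp] ys by blast
  have feas0: "dual_feasible A w y0" using y0 unfolding dual_optimal_def by blast
  have nn0: "\<forall>i. 0 \<le> y0$i" using feas0 unfolding dual_feasible_def by blast
  have maxs: "y0$k \<noteq> 0" if yo: "dual_optimal A b w y" and yk: "y$k \<noteq> 0" for y k
  proof (rule ccontr)
    assume k0: "\<not> y0$k \<noteq> 0"
    let ?y1 = "(1/2) *\<^sub>R (y0 + y)"
    have o1: "dual_optimal A b w ?y1" by (rule avg_opt[OF y0 yo])
    have nny: "\<forall>i. 0 \<le> y$i" using yo unfolding dual_optimal_def dual_feasible_def by blast
    have sub: "{i. y0$i \<noteq> 0} \<subset> {i. ?y1$i \<noteq> 0}"
    proof
      show "{i. y0$i \<noteq> 0} \<subseteq> {i. ?y1$i \<noteq> 0}"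
      proof
        fix i assume "i \<in> {i. y0$i \<noteq> 0}"
        then have "y0$i > 0" using nn0[rule_format, of i] by (simp add: order_le_less)
        then show "i \<in> {i. ?y1$i \<noteq> 0}" using nny[rule_format, of i] by simp
      qed
      have "y$k > 0" using nny[rule_format, of k] yk by (simp add: order_le_less)
      then have "k \<in> {i. ?y1$i \<noteq> 0}" using nn0[rule_format, of k] by simp
      then show "{i. y0$i \<noteq> 0} \<noteq> {i. ?y1$i \<noteq> 0}" using k0 by blast
    qed
    then have "supp y0 < supp ?y1" unfolding supp_def by (intro psubset_card_mono) auto
    then show False using ymax o1 by (meson leD)
  qed
  define \<beta> where "\<beta> = (\<Sum>i\<in>UNIV. ?bb i * y0$i)"
  have weak: "?wv \<bullet> x \<le> \<beta>" if "x \<in> polyP A b" for x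
    unfolding \<beta>_def by (rule weak_duality[OF feas0 that])
  have optb: "\<beta> \<le> (\<Sum>i\<in>UNIV. ?bb i * y$i)" if "dual_feasible A w y" for y
    using y0 that unfolding dual_optimal_def \<beta>_def by blast
  define g where "g u = (case u of None \<Rightarrow> (0, 1) | Some None \<Rightarrow> (- ?wv, - \<beta>)
      | Some (Some i) \<Rightarrow> (?a i, ?bb i))" for u :: "'m option option"
  have gs: "(\<Sum>u\<in>UNIV. c u *\<^sub>R g u) = ((\<Sum>i\<in>UNIV. c (Some (Some i)) *\<^sub>R ?a i) - c (Some None) *\<^sub>R ?wv,
      (\<Sum>i\<in>UNIV. c (Some (Some i)) * ?bb i) - c (Some None) * \<beta> + c None)" for c
    unfolding g_def by (rule gsum)
  have improve: "dual_feasible A w ((1 / (1 + \<mu>)) *\<^sub>R (y0 + (\<chi> i. l i))) \<and>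
      (\<Sum>i\<in>UNIV. ?bb i * ((1 / (1 + \<mu>)) *\<^sub>R (y0 + (\<chi> i. l i)))$i) = (\<beta> + (\<Sum>i\<in>UNIV. l i * ?bb i)) / (1 + \<mu>)"
    if l: "\<forall>i. 0 \<le> l i" and mu: "0 \<le> \<mu>" and eq: "(\<Sum>i\<in>UNIV. l i *\<^sub>R ?a i) = \<mu> *\<^sub>R ?wv" for l \<mu>
  proof
    have pos: "1 + \<mu> > 0" using mu by simp
    have "(\<Sum>i\<in>UNIV. ((1 / (1 + \<mu>)) *\<^sub>R (y0 + (\<chi> i. l i)))$i *\<^sub>R ?a i)
        = (1 / (1 + \<mu>)) *\<^sub>R ((\<Sum>i\<in>UNIV. y0$i *\<^sub>R ?a i) + (\<Sum>i\<in>UNIV. l i *\<^sub>R ?a i))"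
      by (simp add: scaleR_sum_right sum.distrib[symmetric] scaleR_add_left[symmetric])
    also have "\<dots> = (1 / (1 + \<mu>)) *\<^sub>R (?wv + \<mu> *\<^sub>R ?wv)"
      using feas0 eq unfolding dual_feasible_def by simp
    also have "?wv + \<mu> *\<^sub>R ?wv = (1 + \<mu>) *\<^sub>R ?wv" by (simp add: scaleR_add_left)
    also have "(1 / (1 + \<mu>)) *\<^sub>R ((1 + \<mu>) *\<^sub>R ?wv) = ?wv" using pos by simp
    finally show "dual_feasible A w ((1 / (1 + \<mu>)) *\<^sub>R (y0 + (\<chi> i. l i)))"
      unfolding dual_feasible_def using nn0 l pos by simp
    show "(\<Sum>i\<in>UNIV. ?bb i * ((1 / (1 + \<mu>)) *\<^sub>R (y0 + (\<chi> i. l i)))$i) = (\<beta> + (\<Sum>i\<in>UNIV. l i * ?bb i)) / (1 + \<mu>)"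
      unfolding \<beta>_def by (simp add: sum_divide_distrib sum.distrib add_divide_distrib algebra_simps)
  qed
  have "\<exists>x0. x0 \<in> polyP A b \<and> ?wv \<bullet> x0 = \<beta>"
  proof -
    have nomem: "\<not> (\<exists>c. (\<forall>u\<in>UNIV. 0 \<le> c u) \<and> (0::real^'n, -1::real) = (\<Sum>u\<in>UNIV. c u *\<^sub>R g u))"
    proof
      assume "\<exists>c. (\<forall>u\<in>UNIV. 0 \<le> c u) \<and> (0::real^'n, -1::real) = (\<Sum>u\<in>UNIV. c u *\<^sub>R g u)"
      then obtain c where c: "\<forall>u. 0 \<le> c u" "(0::real^'n, -1::real) = (\<Sum>u\<in>UNIV. c u *\<^sub>R g u)" by blast
      let ?l = "\<lambda>i. c (Some (Some i))" and ?\<mu> = "c (Some None)"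
      have e1: "(\<Sum>i\<in>UNIV. ?l i *\<^sub>R ?a i) = ?\<mu> *\<^sub>R ?wv" and e2: "(\<Sum>i\<in>UNIV. ?l i * ?bb i) = ?\<mu> * \<beta> - c None - 1"
        using c(2) unfolding gs by (simp_all add: prod_eq_iff algebra_simps)
      have imp: "dual_feasible A w ((1 / (1 + ?\<mu>)) *\<^sub>R (y0 + (\<chi> i. ?l i)))"
          "(\<Sum>i\<in>UNIV. ?bb i * ((1 / (1 + ?\<mu>)) *\<^sub>R (y0 + (\<chi> i. ?l i)))$i) = (\<beta> + (\<Sum>i\<in>UNIV. ?l i * ?bb i)) / (1 + ?\<mu>)"
        using improve[of ?l ?\<mu>] c(1) e1 by auto
      have pos: "1 + ?\<mu> > 0" using c(1) by (simp add: add_pos_nonneg)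
      have "(\<beta> + (\<Sum>i\<in>UNIV. ?l i * ?bb i)) / (1 + ?\<mu>) < \<beta>"
      proof -
        have cN: "0 \<le> c None" using c(1) by blast
        have "\<beta> + (?\<mu> * \<beta> - c None - 1) < \<beta> * (1 + ?\<mu>)" using cN by (simp add: algebra_simps)
        then show ?thesis unfolding e2 using pos by (simp only: pos_divide_less_eq)
      qed
      then show False using optb[OF imp(1)] imp(2) by simp
    qed
    obtain a where a: "\<forall>u\<in>UNIV. a \<bullet> g u \<le> 0" "a \<bullet> (0::real^'n, -1::real) > 0"
      using farkas_idx[OF _ nomem] by auto
    obtain x s where xs: "a = (x, s)" by (cases a)
    have s0: "s < 0" using a(2) unfolding xs by simp
    have ai: "?a i \<bullet> x + s * ?bb i \<le> 0" for i
      using a(1)[rule_format, of "Some (Some i)"] unfolding xs g_def by (simp add: mult.commute inner_commute)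
    have aw: "- (?wv \<bullet> x) - s * \<beta> \<le> 0" using a(1)[rule_format, of "Some None"] unfolding xs g_def by (simp add: mult.commute inner_commute)
    define t where "t = - 1 / s"
    have t: "t > 0" unfolding t_def using s0 by simp
    have "?a i \<bullet> (t *\<^sub>R x) \<le> ?bb i" for i
    proof -
      have "t * (?a i \<bullet> x) \<le> t * (- s * ?bb i)" using ai[of i] t by (intro mult_left_mono) auto
      then show ?thesis unfolding t_def using s0 by simp
    qed
    then have P: "t *\<^sub>R x \<in> polyP A b" unfolding polyP_def by blast
    have "t * (- s * \<beta>) \<le> t * (?wv \<bullet> x)" using aw t by (intro mult_left_mono) auto
    then have "\<beta> \<le> ?wv \<bullet> (t *\<^sub>R x)" unfolding t_def using s0 by simp
    then show ?thesis using P weak[OF P] by (intro exI[of _ "t *\<^sub>R x"]) auto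
  qed
  then obtain x0 where x0: "x0 \<in> polyP A b" "?wv \<bullet> x0 = \<beta>" by blast
  define G where "G = polyP A b \<inter> {x. ?wv \<bullet> x = \<beta>}"
  have face: "G face_of polyP A b"
    unfolding G_def by (rule face_of_Int_supporting_hyperplane_le[OF convex_polyP weak])
  have x0G: "x0 \<in> G" using x0 unfolding G_def by blast
  have GP: "G \<subseteq> polyP A b" unfolding G_def by blast
  have iff: "i \<in> implicit_eqs A b G \<longleftrightarrow> y0$i \<noteq> 0" for i
  proof
    assume iG: "i \<in> implicit_eqs A b G"
    show "y0$i \<noteq> 0"
    proof (rule ccontr)
      assume y0i: "\<not> y0$i \<noteq> 0"
      have nomem: "\<not> (\<exists>c. (\<forall>u\<in>UNIV. 0 \<le> c u) \<and> (- ?a i, - ?bb i) = (\<Sum>u\<in>UNIV. c u *\<^sub>R g u))"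
      proof
        assume "\<exists>c. (\<forall>u\<in>UNIV. 0 \<le> c u) \<and> (- ?a i, - ?bb i) = (\<Sum>u\<in>UNIV. c u *\<^sub>R g u)"
        then obtain c where c: "\<forall>u. 0 \<le> c u" "(- ?a i, - ?bb i) = (\<Sum>u\<in>UNIV. c u *\<^sub>R g u)" by blast
        let ?l = "\<lambda>j. c (Some (Some j)) + (if j = i then 1 else 0)" and ?\<mu> = "c (Some None)"
        have e1': "- ?a i = (\<Sum>j\<in>UNIV. c (Some (Some j)) *\<^sub>R ?a j) - ?\<mu> *\<^sub>R ?wv"
          and e2': "- ?bb i = (\<Sum>j\<in>UNIV. c (Some (Some j)) * ?bb j) - ?\<mu> * \<beta> + c None"
          using c(2) unfolding gs by (simp_all add: prod_eq_iff)
        have s1: "(\<Sum>j\<in>UNIV. ?l j *\<^sub>R ?a j) = (\<Sum>j\<in>UNIV. c (Some (Some j)) *\<^sub>R ?a j) + ?a i"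
          by (simp add: scaleR_add_left sum.distrib if_distrib[of "\<lambda>t. t *\<^sub>R _"] cong: if_cong)
        have s2: "(\<Sum>j\<in>UNIV. ?l j * ?bb j) = (\<Sum>j\<in>UNIV. c (Some (Some j)) * ?bb j) + ?bb i"
          by (simp add: distrib_right sum.distrib if_distrib[of "\<lambda>t. t * _"] cong: if_cong)
        have e1: "(\<Sum>j\<in>UNIV. ?l j *\<^sub>R ?a j) = ?\<mu> *\<^sub>R ?wv" using e1' s1 by (simp add: algebra_simps)
        have e2: "(\<Sum>j\<in>UNIV. ?l j * ?bb j) \<le> ?\<mu> * \<beta>" using e2' s2 c(1) by (simp add: algebra_simps)
        have lnn: "\<forall>j. 0 \<le> ?l j" using c(1) by simp
        have imp: "dual_feasible A w ((1 / (1 + ?\<mu>)) *\<^sub>R (y0 + (\<chi> j. ?l j)))"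
            "(\<Sum>j\<in>UNIV. ?bb j * ((1 / (1 + ?\<mu>)) *\<^sub>R (y0 + (\<chi> j. ?l j)))$j) = (\<beta> + (\<Sum>j\<in>UNIV. ?l j * ?bb j)) / (1 + ?\<mu>)"
          using improve[OF lnn _ e1] c(1) by auto
        have pos: "1 + ?\<mu> > 0" using c(1) by (simp add: add_pos_nonneg)
        have "(\<beta> + (\<Sum>j\<in>UNIV. ?l j * ?bb j)) / (1 + ?\<mu>) \<le> \<beta>"
          using pos e2 by (simp add: divide_le_eq algebra_simps)
        then have opt1: "dual_optimal A b w ((1 / (1 + ?\<mu>)) *\<^sub>R (y0 + (\<chi> j. ?l j)))"
          unfolding dual_optimal_def using imp optb by fastforce
        have "((1 / (1 + ?\<mu>)) *\<^sub>R (y0 + (\<chi> j. ?l j)))$i > 0"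
          using pos nn0 c(1) by (simp add: add_nonneg_pos add_pos_nonneg)
        then have "((1 / (1 + ?\<mu>)) *\<^sub>R (y0 + (\<chi> j. ?l j)))$i \<noteq> 0" by linarith
        then show False using maxs[OF opt1, of i] y0i by blast
      qed
      obtain a where a: "\<forall>u\<in>UNIV. a \<bullet> g u \<le> 0" "a \<bullet> (- ?a i, - ?bb i) > 0"
        using farkas_idx[OF _ nomem] by auto
      obtain x s where xs: "a = (x, s)" by (cases a)
      have sle: "s \<le> 0" using a(1)[rule_format, of None] unfolding xs g_def by simp
      have ai: "?a j \<bullet> x + s * ?bb j \<le> 0" for j
        using a(1)[rule_format, of "Some (Some j)"] unfolding xs g_def by (simp add: mult.commute inner_commute)
      have aw: "- (?wv \<bullet> x) - s * \<beta> \<le> 0" using a(1)[rule_format, of "Some None"] unfolding xs g_def by (simp add: mult.commute inner_commute)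
      have ak: "?a i \<bullet> x + s * ?bb i < 0" using a(2) unfolding xs by (simp add: mult.commute inner_commute)
      show False
      proof (cases "s = 0")
        case True
        have "?a j \<bullet> (x0 + x) \<le> ?bb j" for j
        proof -
          have "?a j \<bullet> x0 \<le> ?bb j" using x0(1) unfolding polyP_def by blast
          then show ?thesis using ai[of j] True by (simp add: inner_add_right)
        qed
        then have P: "x0 + x \<in> polyP A b" unfolding polyP_def by blast
        have "\<beta> \<le> ?wv \<bullet> (x0 + x)" using aw x0(2) True by (simp add: inner_add_right)
        then have "x0 + x \<in> G" using P weak[OF P] unfolding G_def by auto
        then have "?a i \<bullet> (x0 + x) = ?bb i" using iG unfolding implicit_eqs_def by blast
        moreover have "?a i \<bullet> x0 \<le> ?bb i" using x0(1) unfolding polyP_def by blast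
        ultimately show False using ak True by (simp add: inner_add_right)
      next
        case False
        then have s0: "s < 0" using sle by simp
        define t where "t = - 1 / s"
        have t: "t > 0" unfolding t_def using s0 by simp
        have "?a j \<bullet> (t *\<^sub>R x) \<le> ?bb j" for j
        proof -
          have "t * (?a j \<bullet> x) \<le> t * (- s * ?bb j)" using ai[of j] t by (intro mult_left_mono) auto
          then show ?thesis unfolding t_def using s0 by simp
        qed
        then have P: "t *\<^sub>R x \<in> polyP A b" unfolding polyP_def by blast
        have "t * (- s * \<beta>) \<le> t * (?wv \<bullet> x)" using aw t by (intro mult_left_mono) auto
        then have "\<beta> \<le> ?wv \<bullet> (t *\<^sub>R x)" unfolding t_def using s0 by simp
        then have "t *\<^sub>R x \<in> G" using P weak[OF P] unfolding G_def by auto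
        then have "?a i \<bullet> (t *\<^sub>R x) = ?bb i" using iG unfolding implicit_eqs_def by blast
        moreover have "t * (?a i \<bullet> x) < t * (- s * ?bb i)" using ak t by (intro mult_strict_left_mono) auto
        ultimately show False unfolding t_def using s0 by simp
      qed
    qed
  next
    assume y0i: "y0$i \<noteq> 0"
    show "i \<in> implicit_eqs A b G"
      unfolding implicit_eqs_def
    proof (intro CollectI ballI)
      fix x assume xG: "x \<in> G"
      then have "x \<in> polyP A b" "(\<Sum>i\<in>UNIV. ?bb i * y0$i) = ?wv \<bullet> x" unfolding G_def \<beta>_def by auto
      then show "?a i \<bullet> x = ?bb i" using comp_slack[OF feas0 _ _ y0i] by blast
    qed
  qed
  show ?thesis using y0 face x0G iff by blast
qed



lemma dir31:
  fixes A :: "int^'n^'m" and b :: "int^'m"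
  assumes p: "prime p"
    and H3: "\<forall>F. F face_of polyP A b \<and> F \<noteq> {} \<longrightarrow> padic_gen_subspace p (implicit_eqs A b F) (rowR A)"
  shows "totally_dual_padic p A b"
  unfolding totally_dual_padic_def
proof (intro allI impI)
  fix w :: "int^'n" assume "\<exists>y. dual_optimal A b w y"
  then obtain ys where ys: "dual_optimal A b w ys" by blast
  let ?wv = "(\<chi> j. real_of_int (w$j)) :: real^'n"
  let ?a = "rowR A"
  obtain y0 G where y0: "dual_optimal A b w y0" and face: "G face_of polyP A b" and Gne: "G \<noteq> {}"
    and iff: "\<forall>i. i \<in> implicit_eqs A b G \<longleftrightarrow> y0$i \<noteq> 0"
    using dir31_face[OF ys] by blast
  let ?I = "implicit_eqs A b G"
  have sub: "padic_gen_subspace p ?I ?a" using H3 face Gne by blast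
  have feas0: "dual_feasible A w y0" using y0 unfolding dual_optimal_def by blast
  have nn0: "\<forall>i. 0 \<le> y0$i" using feas0 unfolding dual_feasible_def by blast
  have pos0: "y0$i > 0" if "i \<in> ?I" for i
    using iff that nn0[rule_format, of i] by (simp add: order_le_less)
  have finI: "finite ?I" by simp
  have "?wv = (\<Sum>i\<in>UNIV. y0$i *\<^sub>R ?a i)" using feas0 unfolding dual_feasible_def by simp
  also have "\<dots> = (\<Sum>i\<in>?I. y0$i *\<^sub>R ?a i)"
    using iff by (intro sum.mono_neutral_right) auto
  finally have weq: "?wv = (\<Sum>i\<in>?I. y0$i *\<^sub>R ?a i)" .
  have p0: "p > 0" using p prime_gt_0_nat by blast
  have p1: "real p > 1" using p prime_gt_1_nat by simp
  define cf where "cf v = (SOME c. (\<forall>i\<in>?I. padic_rat p (c i)) \<and> v = (\<Sum>i\<in>?I. c i *\<^sub>R ?a i))"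
    for v :: "real^'n"
  have cf: "(\<forall>i\<in>?I. padic_rat p (cf v i)) \<and> v = (\<Sum>i\<in>?I. cf v i *\<^sub>R ?a i)"
    if "integral_vec v" "v \<in> span (?a ` ?I)" for v
  proof -
    have "\<exists>c. (\<forall>i\<in>?I. padic_rat p (c i)) \<and> v = (\<Sum>i\<in>?I. c i *\<^sub>R ?a i)"
      using sub that unfolding padic_gen_subspace_def by blast
    then show ?thesis unfolding cf_def by (rule someI_ex)
  qed
  define R where "R = {v. integral_vec v \<and> (\<exists>r. (\<forall>i\<in>?I. 0 \<le> r i \<and> r i \<le> 1) \<and> v = (\<Sum>i\<in>?I. r i *\<^sub>R ?a i))}"
  define B where "B = (\<Sum>i\<in>?I. norm (?a i))"
  have RB: "R \<subseteq> {v. integral_vec v \<and> (\<forall>j. \<bar>v$j\<bar> \<le> B)}"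
  proof
    fix v assume "v \<in> R"
    then obtain r where v: "integral_vec v" "\<forall>i\<in>?I. 0 \<le> r i \<and> r i \<le> 1" "v = (\<Sum>i\<in>?I. r i *\<^sub>R ?a i)"
      unfolding R_def by blast
    have "\<bar>v$j\<bar> \<le> B" for j
    proof -
      have "\<bar>v$j\<bar> \<le> norm v" by (rule component_le_norm_cart)
      also have "\<dots> \<le> (\<Sum>i\<in>?I. norm (r i *\<^sub>R ?a i))" unfolding v(3) by (rule norm_sum)
      also have "\<dots> \<le> B" unfolding B_def
      proof (rule sum_mono)
        fix i assume "i \<in> ?I"
        then have "\<bar>r i\<bar> \<le> 1" using v(2) by auto
        then show "norm (r i *\<^sub>R ?a i) \<le> norm (?a i)"
          using mult_right_mono[of "\<bar>r i\<bar>" 1 "norm (?a i)"] by simp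
      qed
      finally show ?thesis .
    qed
    then show "v \<in> {v. integral_vec v \<and> (\<forall>j. \<bar>v$j\<bar> \<le> B)}" using v(1) by blast
  qed
  have finR: "finite R" using finite_subset[OF RB finite_int_box] .
  define C where "C = (\<Sum>v\<in>R. \<Sum>i\<in>?I. \<bar>cf v i\<bar>)"
  have Cb: "\<bar>cf v i\<bar> \<le> C" if "v \<in> R" "i \<in> ?I" for v i
  proof -
    have "\<bar>cf v i\<bar> \<le> (\<Sum>i\<in>?I. \<bar>cf v i\<bar>)" using that finI by (intro member_le_sum) auto
    also have "\<dots> \<le> C" unfolding C_def using that finR
      by (intro member_le_sum[of v R "\<lambda>v. \<Sum>i\<in>?I. \<bar>cf v i\<bar>"]) (auto intro: sum_nonneg)
    finally show ?thesis .
  qed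
  have C0: "0 \<le> C" unfolding C_def by (intro sum_nonneg) auto
  obtain k where k: "(\<Sum>i\<in>?I. (C + 1) / y0$i) < real p ^ k" using real_arch_pow[OF p1] by blast
  define q where "q = real p ^ k"
  have q0: "q > 0" unfolding q_def using p0 by simp
  have big: "C + 1 < q * y0$i" if i: "i \<in> ?I" for i
  proof -
    have "(C + 1) / y0$i \<le> (\<Sum>i\<in>?I. (C + 1) / y0$i)"
      using i finI C0 pos0 by (intro member_le_sum) (auto intro!: divide_nonneg_pos)
    then have "(C + 1) / y0$i < q" using k unfolding q_def by linarith
    then show ?thesis using pos0[OF i] by (simp add: pos_divide_less_eq mult.commute)
  qed
  define u where "u i = \<lfloor>q * y0$i\<rfloor>" for i
  define r where "r i = q * y0$i - real_of_int (u i)" for i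
  have r01: "0 \<le> r i \<and> r i \<le> 1" for i
    unfolding r_def u_def using of_int_floor_le[of "q * y0$i"] real_of_int_floor_add_one_gt[of "q * y0$i"]
    by linarith
  define v where "v = (\<Sum>i\<in>?I. r i *\<^sub>R ?a i)"
  have valt: "v = q *\<^sub>R ?wv - (\<Sum>i\<in>?I. real_of_int (u i) *\<^sub>R ?a i)"
    unfolding v_def r_def weq by (simp add: scaleR_diff_left sum_subtractf scaleR_sum_right)
  have vint: "integral_vec v"
    unfolding integral_vec_def
  proof
    fix j
    have "v$j = q * real_of_int (w$j) - (\<Sum>i\<in>?I. real_of_int (u i) * real_of_int (A$i$j))"
      unfolding valt by (simp add: sum_component rowR_def)
    also have "\<dots> = real_of_int (int p ^ k * w$j - (\<Sum>i\<in>?I. u i * A$i$j))"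
      unfolding q_def by simp
    finally show "v$j \<in> \<int>" by (simp only: Ints_of_int)
  qed
  have vR: "v \<in> R" unfolding R_def
    by (intro CollectI conjI vint exI[of _ r]) (use r01 v_def in auto)
  have vspan: "v \<in> span (?a ` ?I)"
    unfolding v_def by (intro span_sum span_scale span_base) auto
  define c where "c = cf v"
  have c: "\<forall>i\<in>?I. padic_rat p (c i)" "v = (\<Sum>i\<in>?I. c i *\<^sub>R ?a i)"
    using cf[OF vint vspan] unfolding c_def by auto
  have cC: "\<bar>c i\<bar> \<le> C" if "i \<in> ?I" for i unfolding c_def using Cb[OF vR that] .
  define z where "z = (\<chi> i. if i \<in> ?I then (real_of_int (u i) + c i) / q else 0)"
  have znn: "\<forall>i. 0 \<le> z$i"
  proof
    fix i
    show "0 \<le> z$i"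
    proof (cases "i \<in> ?I")
      case True
      have "q * y0$i < real_of_int (u i) + 1" unfolding u_def by (rule real_of_int_floor_add_one_gt)
      then have "0 < real_of_int (u i) + c i" using big[OF True] cC[OF True] by linarith
      then show ?thesis unfolding z_def using True q0 by simp
    next
      case False
      then show ?thesis unfolding z_def by simp
    qed
  qed
  have zpad: "padic_vec p z"
    unfolding padic_vec_def
  proof
    fix i
    show "padic_rat p (z$i)"
    proof (cases "i \<in> ?I")
      case True
      have "padic_rat p ((real_of_int (u i) + c i) / real p ^ k)"
        by (intro padic_div[OF p0] padic_add[OF p0] padic_of_int) (use c(1) True in blast)
      then show ?thesis unfolding z_def q_def using True by simp
    next
      case False
      then show ?thesis unfolding z_def by (simp add: padic_zero)
    qed
  qed
  have "(\<Sum>i\<in>UNIV. z$i *\<^sub>R ?a i) = (\<Sum>i\<in>UNIV. (if i \<in> ?I then (real_of_int (u i) + c i) / q else 0) *\<^sub>R ?a i)"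
    unfolding z_def by simp
  also have "\<dots> = (\<Sum>i\<in>?I. ((real_of_int (u i) + c i) / q) *\<^sub>R ?a i)"
    by (rule sum_restrict_UNIV)
  also have "\<dots> = (1 / q) *\<^sub>R ((\<Sum>i\<in>?I. real_of_int (u i) *\<^sub>R ?a i) + (\<Sum>i\<in>?I. c i *\<^sub>R ?a i))"
    by (simp add: scaleR_sum_right sum.distrib[symmetric] scaleR_add_left[symmetric] add_divide_distrib)
  also have "\<dots> = (1 / q) *\<^sub>R (q *\<^sub>R ?wv)"
    using c(2) valt by (simp add: algebra_simps)
  also have "\<dots> = ?wv" using q0 by simp
  finally have zfeas: "dual_feasible A w z" unfolding dual_feasible_def using znn by simp
  obtain x0 where x0: "x0 \<in> G" using Gne by blast
  have x0P: "x0 \<in> polyP A b" using face_of_imp_subset[OF face] x0 by blast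
  have tight: "\<forall>i. z$i \<noteq> 0 \<longrightarrow> ?a i \<bullet> x0 = real_of_int (b$i)"
  proof (intro allI impI)
    fix i assume "z$i \<noteq> 0"
    then have "i \<in> ?I" unfolding z_def by (cases "i \<in> ?I") auto
    then show "?a i \<bullet> x0 = real_of_int (b$i)" using x0 unfolding implicit_eqs_def by blast
  qed
  have "dual_optimal A b w z" by (rule opt_tight[OF zfeas x0P tight])
  then show "\<exists>y. dual_optimal A b w y \<and> padic_vec p y" using zpad by blast
qed


theorem theorem1p1:
  fixes A :: "int^'n^'m" and b :: "int^'m" and p :: nat
  assumes "prime p"
  shows "(totally_dual_padic p A b \<longleftrightarrow>
            (\<forall>F. F face_of polyP A b \<and> F \<noteq> {} \<longrightarrow>
                 padic_gen_cone p (implicit_eqs A b F) (rowR A)))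
       \<and> (totally_dual_padic p A b \<longleftrightarrow>
            (\<forall>F. F face_of polyP A b \<and> F \<noteq> {} \<longrightarrow>
                 padic_gen_subspace p (implicit_eqs A b F) (rowR A)))"
proof -
  have p0: "p > 0" using assms prime_gt_0_nat by blast
  have i12: "\<forall>F. F face_of polyP A b \<and> F \<noteq> {} \<longrightarrow> padic_gen_cone p (implicit_eqs A b F) (rowR A)"
    if "totally_dual_padic p A b" using dir12[OF that] by blast
  have i23: "\<forall>F. F face_of polyP A b \<and> F \<noteq> {} \<longrightarrow> padic_gen_subspace p (implicit_eqs A b F) (rowR A)"
    if "\<forall>F. F face_of polyP A b \<and> F \<noteq> {} \<longrightarrow> padic_gen_cone p (implicit_eqs A b F) (rowR A)"
    using that dir23[OF _ _ p0] by (metis finite)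
  have i31: "totally_dual_padic p A b"
    if "\<forall>F. F face_of polyP A b \<and> F \<noteq> {} \<longrightarrow> padic_gen_subspace p (implicit_eqs A b F) (rowR A)"
    using dir31[OF assms that] .
  show ?thesis using i12 i23 i31 by blast
qed

end
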